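(* Let $N=[n]$, let $v:2^N\to\mathbb{R}_+$ be a monotone submodular valuation with $v(\emptyset)=0$, and let $X$ be a decision map for $v$. Then for any pure Nash equilibrium $p$ of the pricing game defined by $v$ and $X$, we have $p_i\ge v(\{i\}\mid N\setminus\{i\})$ for every $i\in N$. Moreover, if $S=X(p)$ and $i\notin S$, then $v(\{i\}\mid S)=0$.
   Context: Pricing game: $N=[n]$ services, service $i$ controlled by seller $i$. Buyer valuation $v:2^N\to\mathbb{R}_+$, monotone, $v(\emptyset)=0$; submodular means $v(S\cup T)+v(S\cap T)\le v(S)+v(T)$ for all $S,T$. Marginal value: $v(T\mid S)=v(S\cup T)-v(S)$. For $p\in\mathbb{R}^n_+$, $p(S)=\sum_{j\in S}p_j$, $D(v;p)=\arg\max_{S\subseteq N}(v(S)-p(S))$. A decision map is $X:\mathbb{R}^n_+\to2^N$ with $X(p)\in D(v;p)$ for all $p$. Seller $i$'s utility is $u_i(p)=p_i\mathbf{1}\{i\in X(p)\}$; a pure Nash equilibrium is a $p$ with $u_i(p)\ge u_i(p_i',p_{-i})$ for all $i$ and $p_i'\in\mathbb{R}_+$. *)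

theory Defs
  imports Complex_Main
begin

definition price_vectors :: "nat \<Rightarrow> (nat \<Rightarrow> real) set" where
  "price_vectors n = {p. (\<forall>i\<in>{1..n}. 0 \<le> p i) \<and> (\<forall>i. i \<notin> {1..n} \<longrightarrow> p i = 0)}"

definition valuation :: "nat \<Rightarrow> (nat set \<Rightarrow> real) \<Rightarrow> bool" where
  "valuation n v \<longleftrightarrow> v {} = 0 \<and> (\<forall>S. S \<subseteq> {1..n} \<longrightarrow> 0 \<le> v S)
     \<and> (\<forall>S T. S \<subseteq> T \<and> T \<subseteq> {1..n} \<longrightarrow> v S \<le> v T)"

definition submodular :: "nat \<Rightarrow> (nat set \<Rightarrow> real) \<Rightarrow> bool" where
  "submodular n v \<longleftrightarrow> (\<forall>S T. S \<subseteq> {1..n} \<and> T \<subseteq> {1..n} \<longrightarrow>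
      v (S \<union> T) + v (S \<inter> T) \<le> v S + v T)"

definition marginal :: "(nat set \<Rightarrow> real) \<Rightarrow> nat set \<Rightarrow> nat set \<Rightarrow> real" where
  "marginal v T S = v (S \<union> T) - v S"

definition price_of :: "(nat \<Rightarrow> real) \<Rightarrow> nat set \<Rightarrow> real" where
  "price_of p S = (\<Sum>j\<in>S. p j)"

definition demand :: "nat \<Rightarrow> (nat set \<Rightarrow> real) \<Rightarrow> (nat \<Rightarrow> real) \<Rightarrow> nat set set" where
  "demand n v p = {S. S \<subseteq> {1..n} \<and>
      (\<forall>T. T \<subseteq> {1..n} \<longrightarrow> v T - price_of p T \<le> v S - price_of p S)}"

definition decision_map :: "nat \<Rightarrow> (nat set \<Rightarrow> real) \<Rightarrow> ((nat \<Rightarrow> real) \<Rightarrow> nat set) \<Rightarrow> bool" where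
  "decision_map n v X \<longleftrightarrow> (\<forall>p\<in>price_vectors n. X p \<in> demand n v p)"

definition seller_utility :: "((nat \<Rightarrow> real) \<Rightarrow> nat set) \<Rightarrow> nat \<Rightarrow> (nat \<Rightarrow> real) \<Rightarrow> real" where
  "seller_utility X i p = (if i \<in> X p then p i else 0)"

definition pure_NE :: "nat \<Rightarrow> ((nat \<Rightarrow> real) \<Rightarrow> nat set) \<Rightarrow> (nat \<Rightarrow> real) \<Rightarrow> bool" where
  "pure_NE n X p \<longleftrightarrow> p \<in> price_vectors n \<and>
     (\<forall>i\<in>{1..n}. \<forall>q::real. 0 \<le> q \<longrightarrow> seller_utility X i p \<ge> seller_utility X i (p(i := q)))"

end

theory Submission
  imports Defs
begin

lemma dem_bound:
  assumes "D \<in> demand n v q" "i \<in> {1..n}" "i \<notin> D"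
  shows "v (D \<union> {i}) - v D \<le> q i"
proof -
  have sub: "D \<subseteq> {1..n}" using assms(1) by (simp add: demand_def)
  hence fin: "finite D" using finite_subset by blast
  have "insert i D \<subseteq> {1..n}" using sub assms(2) by auto
  hence "v (insert i D) - price_of q (insert i D) \<le> v D - price_of q D"
    using assms(1) by (simp add: demand_def)
  moreover have "price_of q (insert i D) = q i + price_of q D"
    using fin assms(3) by (simp add: price_of_def)
  ultimately show ?thesis by simp
qed

lemma price_same:
  assumes "i \<notin> D" shows "price_of (p(i := x)) D = price_of p D"
  unfolding price_of_def using assms by (intro sum.cong) auto

theorem mainTheorem5:
  fixes n :: nat and v :: "nat set \<Rightarrow> real" and X :: "(nat \<Rightarrow> real) \<Rightarrow> nat set"
    and p :: "nat \<Rightarrow> real"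
  assumes "valuation n v" and "submodular n v" and "decision_map n v X"
    and "pure_NE n X p"
  shows "(\<forall>i\<in>{1..n}. p i \<ge> marginal v {i} ({1..n} - {i}))
       \<and> (\<forall>i\<in>{1..n}. i \<notin> X p \<longrightarrow> marginal v {i} (X p) = 0)"
proof (intro conjI ballI impI)
  have pv: "p \<in> price_vectors n" using assms(4) by (simp add: pure_NE_def)
  have ne: "\<And>i q. i \<in> {1..n} \<Longrightarrow> 0 \<le> q \<Longrightarrow> seller_utility X i (p(i := q)) \<le> seller_utility X i p"
    using assms(4) by (simp add: pure_NE_def)
  have pvq: "\<And>i q. i \<in> {1..n} \<Longrightarrow> 0 \<le> q \<Longrightarrow> p(i := q) \<in> price_vectors n"
    using pv by (auto simp: price_vectors_def)
  have dem: "\<And>q. q \<in> price_vectors n \<Longrightarrow> X q \<in> demand n v q"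
    using assms(3) by (simp add: decision_map_def)
  have p0: "\<And>i. i \<in> {1..n} \<Longrightarrow> 0 \<le> p i" using pv by (simp add: price_vectors_def)
  have mono: "\<And>S T. S \<subseteq> T \<Longrightarrow> T \<subseteq> {1..n} \<Longrightarrow> v S \<le> v T"
    using assms(1) by (simp add: valuation_def)
  fix i assume i: "i \<in> {1..n}"
  {
    define m where "m = v {1..n} - v ({1..n} - {i})"
    show "p i \<ge> marginal v {i} ({1..n} - {i})"
    proof (rule ccontr)
      assume "\<not> ?thesis"
      hence lt: "p i < m" using i by (simp add: marginal_def m_def insert_absorb Un_commute)
      define q where "q = (p i + m) / 2"
      have q0: "0 \<le> q" "p i < q" "q < m" using lt p0[OF i] by (auto simp: q_def)
      let ?p' = "p(i := q)"
      have D: "X ?p' \<in> demand n v ?p'" using dem pvq i q0 by auto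
      have Dsub: "X ?p' \<subseteq> {1..n}" using D by (simp add: demand_def)
      have "i \<in> X ?p'"
      proof (rule ccontr)
        assume ni: "i \<notin> X ?p'"
        have "v (X ?p' \<union> {i}) - v (X ?p') \<le> q" using dem_bound[OF D i ni] by simp
        moreover have "m \<le> v (X ?p' \<union> {i}) - v (X ?p')"
        proof -
          have "v ((X ?p' \<union> {i}) \<union> ({1..n} - {i})) + v ((X ?p' \<union> {i}) \<inter> ({1..n} - {i}))
              \<le> v (X ?p' \<union> {i}) + v ({1..n} - {i})"
          proof -
            have "X ?p' \<union> {i} \<subseteq> {1..n}" "{1..n} - {i} \<subseteq> {1..n}" using Dsub i by auto
            thus ?thesis using assms(2) unfolding submodular_def
              by (metis (no_types, lifting))
          qed
          moreover have "(X ?p' \<union> {i}) \<union> ({1..n} - {i}) = {1..n}" using Dsub i by auto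
          moreover have "(X ?p' \<union> {i}) \<inter> ({1..n} - {i}) = X ?p'" using Dsub ni by auto
          ultimately show ?thesis by (simp add: m_def)
        qed
        ultimately show False using q0 by simp
      qed
      hence "seller_utility X i ?p' = q" by (simp add: seller_utility_def)
      moreover have "seller_utility X i p \<le> p i" using p0[OF i] by (simp add: seller_utility_def)
      ultimately show False using ne[OF i q0(1)] q0 by simp
    qed
  }
  {
    assume ni: "i \<notin> X p"
    define S where "S = X p"
    have DS: "S \<in> demand n v p" using dem pv by (simp add: S_def)
    have Ssub: "S \<subseteq> {1..n}" using DS by (simp add: demand_def)
    define d where "d = v (S \<union> {i}) - v S"
    have d0: "0 \<le> d" using mono[of S "S \<union> {i}"] Ssub i by (auto simp: d_def)
    show "marginal v {i} (X p) = 0"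
    proof (rule ccontr)
      assume "\<not> ?thesis"
      hence dpos: "0 < d" using d0 by (simp add: marginal_def d_def S_def)
      define q where "q = d / 2"
      have q0: "0 \<le> q" "0 < q" "q < d" using dpos by (auto simp: q_def)
      let ?p' = "p(i := q)"
      have D: "X ?p' \<in> demand n v ?p'" using dem pvq i q0 by auto
      have Dsub: "X ?p' \<subseteq> {1..n}" using D by (simp add: demand_def)
      have "i \<in> X ?p'"
      proof (rule ccontr)
        assume ni2: "i \<notin> X ?p'"
        have "v (X ?p') - price_of p (X ?p') \<le> v S - price_of p S"
          using DS Dsub by (simp add: demand_def)
        moreover have "price_of ?p' (X ?p') = price_of p (X ?p')" by (rule price_same[OF ni2])
        moreover have "price_of ?p' S = price_of p S" using ni by (simp add: S_def price_same)
        moreover have "v (S \<union> {i}) - price_of ?p' (S \<union> {i}) \<le> v (X ?p') - price_of ?p' (X ?p')"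
          using D Ssub i by (simp add: demand_def)
        moreover have "price_of ?p' (S \<union> {i}) = q + price_of ?p' S"
        proof -
          have "finite S" using Ssub finite_subset by blast
          thus ?thesis using ni by (simp add: price_of_def S_def)
        qed
        ultimately show False using q0 by (simp add: d_def)
      qed
      hence "seller_utility X i ?p' = q" by (simp add: seller_utility_def)
      moreover have "seller_utility X i p = 0" using ni by (simp add: seller_utility_def)
      ultimately show False using ne[OF i q0(1)] q0 by simp
    qed
  }
qed

end
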